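(* Let $n\in\mathbb{N}$ and $a_0,a_1,a_2\in\mathbb{C}$ with $a_0\neq0$, and let $\lambda_1,\lambda_2$ be the roots of $a_0\lambda^2+a_1\lambda+a_2=0$. If $\Re(\lambda_1)\Re(\lambda_2)\neq0$, then the equation $a_0\bm{x}''+a_1\bm{x}'+a_2\bm{x}=\bm{0}$ (with $\bm{x}\in C^2(\mathbb{R},\mathbb{C}^n)$) is Ulam stable on $\mathbb{R}$, and $\dfrac{1}{|a_0\Re(\lambda_1)\Re(\lambda_2)|}$ is an Ulam constant.
   Context: $\|\cdot\|$ is a norm on $\mathbb{C}^n$. Ulam stability: the equation $\alpha(t)\bm{x}''+\beta(t)\bm{x}'+\gamma(t)\bm{x}=\bm{f}(t)$ is Ulam stable on $I$ if there exists a constant $L>0$ such that for every $\varepsilon>0$ and every $\bm{\xi}\in C^2(I,\mathbb{C}^n)$ with $\sup_{t\in I}\|\alpha(t)\bm{\xi}''(t)+\beta(t)\bm{\xi}'(t)+\gamma(t)\bm{\xi}(t)-\bm{f}(t)\|\le\varepsilon$, there exists a solution $\bm{x}\in C^2(I,\mathbb{C}^n)$ of the equation with $\sup_{t\in I}\|\bm{\xi}(t)-\bm{x}(t)\|\le L\varepsilon$; such an $L$ is called an Ulam constant for the equation on $I$. $\Re(z)$ denotes the real part of $z$. *)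

theory Defs
  imports "HOL-Analysis.Analysis"
begin

text \<open>Vectors of C^n are modelled as complex ^ 'n with 'n a finite index type
  (n = CARD('n)). Scalar multiplication by a complex number is componentwise.\<close>

definition csmult :: "complex \<Rightarrow> complex ^ 'n \<Rightarrow> complex ^ 'n" where
  "csmult c v = (\<chi> i. c * v $ i)"

definition is_norm :: "(complex ^ 'n \<Rightarrow> real) \<Rightarrow> bool" where
  "is_norm N \<longleftrightarrow>
     (\<forall>v. 0 \<le> N v) \<and> (\<forall>v. N v = 0 \<longleftrightarrow> v = 0) \<and>
     (\<forall>v w. N (v + w) \<le> N v + N w) \<and>
     (\<forall>c v. N (csmult c v) = cmod c * N v)"

definition D1 :: "real set \<Rightarrow> (real \<Rightarrow> complex ^ 'n) \<Rightarrow> real \<Rightarrow> complex ^ 'n" where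
  "D1 I x t = vector_derivative x (at t within I)"

definition D2 :: "real set \<Rightarrow> (real \<Rightarrow> complex ^ 'n) \<Rightarrow> real \<Rightarrow> complex ^ 'n" where
  "D2 I x t = vector_derivative (D1 I x) (at t within I)"

definition C2_on :: "real set \<Rightarrow> (real \<Rightarrow> complex ^ 'n) \<Rightarrow> bool" where
  "C2_on I x \<longleftrightarrow>
     (\<forall>t\<in>I. (x has_vector_derivative D1 I x t) (at t within I)) \<and>
     (\<forall>t\<in>I. (D1 I x has_vector_derivative D2 I x t) (at t within I)) \<and>
     continuous_on I (D2 I x)"

definition ode_op :: "real set \<Rightarrow> (real \<Rightarrow> complex) \<Rightarrow> (real \<Rightarrow> complex) \<Rightarrow> (real \<Rightarrow> complex)
    \<Rightarrow> (real \<Rightarrow> complex ^ 'n) \<Rightarrow> real \<Rightarrow> complex ^ 'n" where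
  "ode_op I \<alpha> \<beta> \<gamma> x t = csmult (\<alpha> t) (D2 I x t) + csmult (\<beta> t) (D1 I x t) + csmult (\<gamma> t) (x t)"

definition ulam_constant :: "(complex ^ 'n \<Rightarrow> real) \<Rightarrow> real set \<Rightarrow> (real \<Rightarrow> complex) \<Rightarrow>
    (real \<Rightarrow> complex) \<Rightarrow> (real \<Rightarrow> complex) \<Rightarrow> (real \<Rightarrow> complex ^ 'n) \<Rightarrow> real \<Rightarrow> bool" where
  "ulam_constant N I \<alpha> \<beta> \<gamma> f L \<longleftrightarrow> L > 0 \<and>
     (\<forall>\<epsilon>>0. \<forall>\<xi>. C2_on I \<xi> \<and> (\<forall>t\<in>I. N (ode_op I \<alpha> \<beta> \<gamma> \<xi> t - f t) \<le> \<epsilon>) \<longrightarrow>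
        (\<exists>x. C2_on I x \<and> (\<forall>t\<in>I. ode_op I \<alpha> \<beta> \<gamma> x t = f t) \<and>
             (\<forall>t\<in>I. N (\<xi> t - x t) \<le> L * \<epsilon>)))"

definition ulam_stable :: "(complex ^ 'n \<Rightarrow> real) \<Rightarrow> real set \<Rightarrow> (real \<Rightarrow> complex) \<Rightarrow>
    (real \<Rightarrow> complex) \<Rightarrow> (real \<Rightarrow> complex) \<Rightarrow> (real \<Rightarrow> complex ^ 'n) \<Rightarrow> bool" where
  "ulam_stable N I \<alpha> \<beta> \<gamma> f \<longleftrightarrow> (\<exists>L. ulam_constant N I \<alpha> \<beta> \<gamma> f L)"

end

theory Submission imports Defs "HOL-Real_Asymp.Real_Asymp" begin

lemma csmult_nth[simp]: "csmult c v $ i = c * v $ i"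
  by (simp add: csmult_def)

lemma csmult_simps[simp]:
  "csmult a (csmult b v) = csmult (a*b) v"
  "csmult (a+b) v = csmult a v + csmult b v"
  "csmult a (v + w) = csmult a v + csmult a w"
  "csmult a (v - w) = csmult a v - csmult a w"
  "csmult (a-b) v = csmult a v - csmult b v"
  "csmult a (-v) = - csmult a v"
  "csmult (-a) v = - csmult a v"
  "csmult 1 v = v" "csmult 0 v = 0" "csmult a 0 = 0"
  by (simp_all add: vec_eq_iff algebra_simps)

lemma csmult_of_real: "csmult (of_real r) v = r *\<^sub>R v"
  by (simp add: vec_eq_iff scaleR_conv_of_real[where 'a=complex])

lemma norm_csmult: "norm (csmult c v) = cmod c * norm v"
proof -
  have "norm (csmult c v) = L2_set (\<lambda>i. cmod c * norm (v $ i)) UNIV"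
    by (simp add: norm_vec_def norm_mult)
  also have "\<dots> = cmod c * norm v"
    by (simp add: L2_set_right_distrib norm_vec_def)
  finally show ?thesis .
qed

lemma bb_csmult: "bounded_bilinear (csmult :: complex \<Rightarrow> complex^'n \<Rightarrow> complex^'n)"
proof
  show "\<exists>K. \<forall>a b. norm (csmult a (b::complex^'n)) \<le> norm a * norm b * K"
    by (rule exI[of _ 1]) (simp add: norm_csmult)
qed (simp_all add: vec_eq_iff algebra_simps scaleR_conv_of_real[where 'a=complex])

context
  fixes N :: "complex^'n \<Rightarrow> real"
  assumes N: "is_norm N"
begin

lemma N_nonneg: "0 \<le> N v" and N_eq0: "N v = 0 \<longleftrightarrow> v = 0"
  and N_tri: "N (v + w) \<le> N v + N w" and N_cs: "N (csmult c v) = cmod c * N v"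
  using N by (auto simp: is_norm_def)

lemma N_zero[simp]: "N 0 = 0" using N_eq0 by simp

lemma N_minus: "N (- v) = N v"
  using N_cs[of "-1" v] by simp

lemma N_commute: "N (v - w) = N (w - v)"
  using N_minus[of "v - w"] by simp

lemma N_scaleR: "N (r *\<^sub>R v) = \<bar>r\<bar> * N v"
  using N_cs[of "of_real r" v] by (simp add: csmult_of_real)

lemma N_sum: "N (sum f A) \<le> (\<Sum>i\<in>A. N (f i))"
proof (induction A rule: infinite_finite_induct)
  case (insert x F)
  then show ?case using N_tri[of "f x" "sum f F"] by simp
qed simp_all

lemma N_upper: "N v \<le> (\<Sum>i\<in>UNIV. N (axis i 1)) * norm v"
proof -
  have v: "v = (\<Sum>i\<in>UNIV. csmult (v$i) (axis i 1))"
    by (simp add: vec_eq_iff axis_def mult.commute[of "v$_"] if_distrib cong: if_cong)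
  have "N v \<le> (\<Sum>i\<in>UNIV. N (csmult (v$i) (axis i 1)))"
    by (subst v) (rule N_sum)
  also have "\<dots> = (\<Sum>i\<in>UNIV. cmod (v$i) * N (axis i 1))" by (simp add: N_cs)
  also have "\<dots> \<le> (\<Sum>i\<in>UNIV. norm v * N (axis i 1))"
    by (intro sum_mono mult_right_mono Finite_Cartesian_Product.norm_nth_le N_nonneg)
  finally show ?thesis by (simp add: sum_distrib_left mult.commute)
qed

lemma N_cont: "continuous_on S N"
proof -
  define C where "C = (\<Sum>i\<in>UNIV. N (axis i 1))"
  have C: "0 \<le> C" unfolding C_def by (intro sum_nonneg N_nonneg)
  have "C-lipschitz_on UNIV N"
  proof (rule lipschitz_onI[OF _ C])
    fix x y
    have "N x \<le> N y + N (x - y)" using N_tri[of y "x - y"] by simp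
    moreover have "N y \<le> N x + N (x - y)" using N_tri[of x "y - x"] N_commute[of x y] by simp
    ultimately have "dist (N x) (N y) \<le> N (x - y)" by (simp add: dist_real_def abs_le_iff)
    also have "\<dots> \<le> C * dist x y" using N_upper[of "x-y"] by (simp add: C_def dist_norm)
    finally show "dist (N x) (N y) \<le> C * dist x y" .
  qed
  then show ?thesis by (meson continuous_on_subset lipschitz_on_continuous_on top_greatest)
qed

lemma N_lower: "\<exists>m>0. \<forall>v. m * norm v \<le> N v"
proof -
  obtain i :: 'n where True by simp
  have a0: "axis i (1::complex) \<noteq> 0" by (metis axis_nth zero_index zero_neq_one)
  have ne: "sphere (0::complex^'n) 1 \<noteq> {}"
    using a0 by (intro notI) (auto dest!: equals0D[where a="(1/norm (axis i (1::complex))) *\<^sub>R axis i 1"])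
  obtain x where x: "x \<in> sphere 0 1" "\<And>y. y \<in> sphere 0 1 \<Longrightarrow> N x \<le> N y"
    using continuous_attains_inf[OF compact_sphere ne N_cont] by blast
  have "x \<noteq> 0" using x(1) by auto
  then have m: "N x > 0" using N_eq0 N_nonneg by (metis order_le_less)
  show ?thesis
  proof (intro exI conjI allI)
    fix v :: "complex^'n"
    show "N x * norm v \<le> N v"
    proof (cases "v = 0")
      case False
      then have "N x \<le> N ((1/norm v) *\<^sub>R v)" by (intro x(2)) simp
      also have "\<dots> = N v / norm v" by (simp add: N_scaleR)
      finally show ?thesis using False by (simp add: field_simps)
    qed simp
  qed (rule m)
qed

lemma N_convex: "convex {v. N v \<le> r}"
proof (rule convexI)
  fix x y :: "complex^'n" and u v :: real
  assume "x \<in> {v. N v \<le> r}" "y \<in> {v. N v \<le> r}" "0 \<le> u" "0 \<le> v" "u + v = 1"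
  then have "N (u *\<^sub>R x + v *\<^sub>R y) \<le> u * N x + v * N y"
    using N_tri[of "u *\<^sub>R x" "v *\<^sub>R y"] by (simp add: N_scaleR)
  also have "\<dots> \<le> u * r + v * r"
    using \<open>x \<in> _\<close> \<open>y \<in> _\<close> \<open>0 \<le> u\<close> \<open>0 \<le> v\<close>
    by (intro add_mono mult_left_mono) auto
  finally show "u *\<^sub>R x + v *\<^sub>R y \<in> {v. N v \<le> r}" using \<open>u + v = 1\<close> by (simp add: distrib_right[symmetric])
qed

lemma N_closed: "closed {v. N v \<le> r}"
  by (rule closed_Collect_le) (auto intro: N_cont continuous_on_const)

lemma N_mvt:
  assumes ab: "a \<le> b"
    and fd: "\<And>s. (f has_vector_derivative f' s) (at s)"
    and Bd: "\<And>s. (B has_real_derivative B' s) (at s)"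
    and le: "\<And>s. N (f' s) \<le> B' s"
  shows "N (f b - f a) \<le> B b - B a"
proof (rule ccontr)
  assume neg: "\<not> ?thesis"
  define r where "r = B b - B a"
  define d where "d = N (f b - f a)"
  have r0: "0 \<le> r" unfolding r_def
    using DERIV_nonneg_imp_nondecreasing[OF ab, of B] Bd le N_nonneg
    by (smt (verit))
  have rd: "r < d" using neg by (simp add: r_def d_def)
  define r' where "r' = (r + d) / 2"
  have r': "r < r'" "r' < d" "0 < r'" using rd r0 by (auto simp: r'_def)
  have "f b - f a \<notin> {v. N v \<le> r'}" using r' by (simp add: d_def)
  then obtain w c where wc: "inner w (f b - f a) < c" "\<And>x. x \<in> {v. N v \<le> r'} \<Longrightarrow> inner w x > c"
    using separating_hyperplane_closed_point[OF N_convex N_closed] by blast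
  have c0: "c < 0" using wc(2)[of 0] r' by simp
  have key: "inner w v \<ge> (c / r') * N v" for v
  proof (cases "v = 0")
    case False
    then have Nv: "N v > 0" using N_eq0 N_nonneg by (metis order_le_less)
    have "N ((r' / N v) *\<^sub>R v) \<le> r'" using Nv r' by (simp add: N_scaleR)
    then have "inner w ((r' / N v) *\<^sub>R v) > c" by (intro wc(2)) simp
    then have "(r' / N v) * inner w v > c" by simp
    then show ?thesis using Nv r' by (simp add: field_simps)
  qed simp
  define \<phi> where "\<phi> s = inner w (f s) - (c / r') * B s" for s
  have "\<phi> a \<le> \<phi> b"
  proof (rule DERIV_nonneg_imp_nondecreasing[OF ab])
    fix s
    have d1: "((\<lambda>s. inner w (f s)) has_real_derivative inner w (f' s)) (at s)"
      using bounded_linear.has_vector_derivative[OF bounded_linear_inner_right fd[of s], of w]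
      by (simp add: has_real_derivative_iff_has_vector_derivative)
    have "(\<phi> has_real_derivative inner w (f' s) - (c / r') * B' s) (at s)"
      unfolding \<phi>_def by (intro derivative_intros d1 DERIV_cmult Bd)
    moreover have "inner w (f' s) - (c / r') * B' s \<ge> 0"
    proof -
      have "(c / r') * B' s \<le> (c / r') * N (f' s)"
        using le[of s] c0 r' by (intro mult_left_mono_neg) (auto simp: divide_nonpos_pos)
      then show ?thesis using key[of "f' s"] by linarith
    qed
    ultimately show "\<exists>y. (\<phi> has_real_derivative y) (at s) \<and> 0 \<le> y" by blast
  qed
  then have "inner w (f b - f a) \<ge> (c / r') * r"
    by (simp add: \<phi>_def r_def inner_diff_right algebra_simps)
  moreover have "(c / r') * r \<ge> c"
  proof -
    have "c * r \<ge> c * r'" using c0 r' by (intro mult_left_mono_neg) auto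
    then show ?thesis using r' by (simp add: field_simps)
  qed
  ultimately show False using wc(1) by linarith
qed

lemma first_pos:
  assumes l: "Re l > 0"
    and hd: "\<And>t. (\<eta> has_vector_derivative \<eta>' t) (at t)"
    and bd: "\<And>t. N (\<eta>' t - csmult l (\<eta> t)) \<le> \<delta>"
  shows "\<exists>c. \<forall>t. N (\<eta> t - csmult (exp (l * of_real t)) c) \<le> \<delta> / Re l"
proof -
  have \<delta>0: "0 \<le> \<delta>" using bd[of 0] N_nonneg order_trans by blast
  define E where "E = (\<lambda>s::real. exp (- (l * of_real s)))"
  define w where "w = (\<lambda>s. csmult (E s) (\<eta> s))"
  define g where "g s = \<delta> / Re l * exp (- (Re l * s))" for s :: real
  have Ed: "(E has_vector_derivative (- l * E s)) (at s)" for s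
  proof -
    have "((\<lambda>z. exp (- (l * z))) has_field_derivative (- l * exp (- (l * of_real s)))) (at (of_real s))"
      by (auto intro!: derivative_eq_intros)
    from has_vector_derivative_real_field[OF this, of UNIV] show ?thesis by (simp add: E_def)
  qed
  have wd: "(w has_vector_derivative csmult (E s) (\<eta>' s - csmult l (\<eta> s))) (at s)" for s
    using bounded_bilinear.has_vector_derivative[OF bb_csmult Ed[of s] hd[of s]]
    by (simp add: w_def algebra_simps mult.commute)
  have Ecm: "cmod (E s) = exp (- (Re l * s))" for s by (simp add: E_def)
  have Bd: "((\<lambda>s. - (\<delta> / Re l) * exp (- (Re l * s))) has_real_derivative \<delta> * exp (- (Re l * s))) (at s)" for s
    using l by (auto intro!: derivative_eq_intros)
  have inc: "N (w T - w S) \<le> g S" if "S \<le> T" for S T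
  proof -
    have "N (w T - w S) \<le> - (\<delta> / Re l) * exp (- (Re l * T)) - (- (\<delta> / Re l) * exp (- (Re l * S)))"
    proof (rule N_mvt[OF that wd Bd])
      fix s
      show "N (csmult (E s) (\<eta>' s - csmult l (\<eta> s))) \<le> \<delta> * exp (- (Re l * s))"
        unfolding N_cs Ecm using bd[of s] by (simp add: mult.commute mult_left_mono)
    qed
    also have "\<dots> \<le> g S" using l \<delta>0 by (simp add: g_def)
    finally show ?thesis .
  qed
  have gmono: "g T \<le> g S" if "S \<le> T" for S T
    unfolding g_def by (rule mult_left_mono) (use that l \<delta>0 in auto)
  obtain m0 where m0: "m0 > 0" "\<And>v. m0 * norm v \<le> N v" using N_lower by blast
  have "Cauchy (\<lambda>n::nat. w (real n))"
  proof (rule metric_CauchyI)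
    fix e :: real assume e: "e > 0"
    have "(\<lambda>n::nat. g (real n) / m0) \<longlonglongrightarrow> 0"
      using l m0(1) unfolding g_def by real_asymp
    then have "eventually (\<lambda>n. g (real n) / m0 < e) sequentially"
      using e by (rule order_tendstoD)
    then obtain M where M: "g (real M) / m0 < e" by (auto simp: eventually_sequentially)
    have "dist (w (real m)) (w (real n)) < e" if "m \<ge> M" "n \<ge> M" for m n
    proof -
      have "N (w (real m) - w (real n)) \<le> g (real M)"
      proof (cases "n \<le> m")
        case True
        then show ?thesis using inc[of "real n" "real m"] gmono[of "real M" "real n"] that by simp
      next
        case False
        then show ?thesis using inc[of "real m" "real n"] gmono[of "real M" "real m"] that
          N_commute[of "w (real m)"] by simp
      qed
      then have "m0 * dist (w (real m)) (w (real n)) \<le> g (real M)"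
        using m0(2)[of "w (real m) - w (real n)"] by (simp add: dist_norm)
      then have "dist (w (real m)) (w (real n)) \<le> g (real M) / m0" using m0(1) by (simp add: field_simps)
      then show ?thesis using M by linarith
    qed
    then show "\<exists>M. \<forall>m\<ge>M. \<forall>n\<ge>M. dist (w (real m)) (w (real n)) < e" by blast
  qed
  then obtain c where c: "(\<lambda>n::nat. w (real n)) \<longlonglongrightarrow> c"
    using Cauchy_convergent_iff convergent_def by blast
  have cS: "N (c - w S) \<le> g S" for S
  proof -
    have lim: "(\<lambda>n::nat. N (w (real n) - w S)) \<longlonglongrightarrow> N (c - w S)"
      using N_cont[of UNIV] c
      by (intro continuous_on_tendsto_compose[of UNIV N] tendsto_diff tendsto_const) auto
    have ev: "eventually (\<lambda>n. N (w (real n) - w S) \<le> g S) sequentially"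
    proof -
      obtain k :: nat where "S \<le> real k" using real_arch_simple by blast
      then show ?thesis
        by (auto simp: eventually_sequentially intro!: exI[of _ k] inc)
    qed
    show ?thesis using tendsto_upperbound[OF lim ev] by simp
  qed
  show ?thesis
  proof (intro exI allI)
    fix t
    have "\<eta> t = csmult (exp (l * of_real t)) (w t)"
      by (simp add: w_def E_def exp_minus field_simps)
    then have eq: "\<eta> t - csmult (exp (l * of_real t)) c = csmult (exp (l * of_real t)) (w t - c)"
      by simp
    have "N (\<eta> t - csmult (exp (l * of_real t)) c) = exp (Re l * t) * N (c - w t)"
      unfolding eq N_cs by (simp add: N_commute)
    also have "\<dots> \<le> exp (Re l * t) * g t" by (intro mult_left_mono cS) simp
    also have "\<dots> = \<delta> / Re l" by (simp add: g_def exp_minus field_simps)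
    finally show "N (\<eta> t - csmult (exp (l * of_real t)) c) \<le> \<delta> / Re l" .
  qed
qed

lemma first_gen:
  assumes l: "Re l \<noteq> 0"
    and hd: "\<And>t. (\<eta> has_vector_derivative \<eta>' t) (at t)"
    and bd: "\<And>t. N (\<eta>' t - csmult l (\<eta> t)) \<le> \<delta>"
  shows "\<exists>c. \<forall>t. N (\<eta> t - csmult (exp (l * of_real t)) c) \<le> \<delta> / \<bar>Re l\<bar>"
proof (cases "Re l > 0")
  case True
  then show ?thesis using first_pos[OF True hd bd] by simp
next
  case False
  then have l': "Re (- l) > 0" using l by simp
  have hd': "((\<lambda>t. \<eta> (- t)) has_vector_derivative - \<eta>' (- t)) (at t)" for t
  proof -
    have "((\<eta> \<circ> uminus) has_vector_derivative (-1) *\<^sub>R \<eta>' (- t)) (at t)"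
      by (rule vector_diff_chain_at) (auto intro!: derivative_eq_intros hd)
    then show ?thesis by (simp add: o_def)
  qed
  have bd': "N (- \<eta>' (- t) - csmult (- l) (\<eta> (- t))) \<le> \<delta>" for t
  proof -
    have "- \<eta>' (- t) - csmult (- l) (\<eta> (- t)) = - (\<eta>' (- t) - csmult l (\<eta> (- t)))" by simp
    then show ?thesis using bd[of "-t"] by (simp only: N_minus)
  qed
  obtain c where c: "\<And>t. N (\<eta> (- t) - csmult (exp (- l * of_real t)) c) \<le> \<delta> / Re (- l)"
    using first_pos[OF l' hd' bd'] by blast
  show ?thesis
  proof (intro exI allI)
    fix t
    show "N (\<eta> t - csmult (exp (l * of_real t)) c) \<le> \<delta> / \<bar>Re l\<bar>"
      using c[of "-t"] False l by simp
  qed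
qed

end

lemma csm_deriv_left:
  assumes "(f has_vector_derivative f') (at t)"
  shows "((\<lambda>t. csmult (f t) c) has_vector_derivative csmult f' c) (at t)"
  using bounded_bilinear.has_vector_derivative[OF bb_csmult assms has_vector_derivative_const[of c]]
  by simp

lemma csm_deriv_right:
  assumes "(f has_vector_derivative f') (at t)"
  shows "((\<lambda>t. csmult c (f t)) has_vector_derivative csmult c f') (at t)"
  using bounded_bilinear.has_vector_derivative[OF bb_csmult has_vector_derivative_const[of c] assms]
  by simp

lemma csm_cont:
  assumes "continuous_on UNIV f"
  shows "continuous_on UNIV (\<lambda>t. csmult (f t) c)"
  by (rule bounded_bilinear.continuous_on[OF bb_csmult assms continuous_on_const])

lemma sol2:
  fixes c1 c2 :: "complex^'n"
  assumes f1: "\<And>t. (f has_vector_derivative f1 t) (at t)"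
    and f2: "\<And>t. (f1 has_vector_derivative f2 t) (at t)"
    and fc: "continuous_on UNIV f2"
    and g1: "\<And>t. (g has_vector_derivative g1 t) (at t)"
    and g2: "\<And>t. (g1 has_vector_derivative g2 t) (at t)"
    and gc: "continuous_on UNIV g2"
    and x: "x = (\<lambda>t. csmult (f t) c1 + csmult (g t) c2)"
  shows "C2_on UNIV x"
    and "D1 UNIV x = (\<lambda>t. csmult (f1 t) c1 + csmult (g1 t) c2)"
    and "D2 UNIV x = (\<lambda>t. csmult (f2 t) c1 + csmult (g2 t) c2)"
proof -
  have xd: "(x has_vector_derivative csmult (f1 t) c1 + csmult (g1 t) c2) (at t)" for t
    unfolding x by (intro has_vector_derivative_add csm_deriv_left f1 g1)
  show d1: "D1 UNIV x = (\<lambda>t. csmult (f1 t) c1 + csmult (g1 t) c2)"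
    unfolding D1_def using xd by (simp add: fun_eq_iff vector_derivative_at)
  have x1d: "((\<lambda>t. csmult (f1 t) c1 + csmult (g1 t) c2) has_vector_derivative csmult (f2 t) c1 + csmult (g2 t) c2) (at t)" for t
    by (intro has_vector_derivative_add csm_deriv_left f2 g2)
  show d2: "D2 UNIV x = (\<lambda>t. csmult (f2 t) c1 + csmult (g2 t) c2)"
    unfolding D2_def d1 using x1d by (simp add: fun_eq_iff vector_derivative_at)
  show "C2_on UNIV x"
    unfolding C2_on_def d1 d2 using xd x1d
    by (auto intro!: continuous_on_add csm_cont fc gc)
qed

theorem corollary3p2:
  fixes N :: "complex ^ 'n \<Rightarrow> real"
    and a0 a1 a2 l1 l2 :: complex
  assumes "is_norm N"
    and "a0 \<noteq> 0"
    and "\<forall>z. a0 * z\<^sup>2 + a1 * z + a2 = a0 * (z - l1) * (z - l2)"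
    and "Re l1 * Re l2 \<noteq> 0"
  shows "ulam_stable N UNIV (\<lambda>_. a0) (\<lambda>_. a1) (\<lambda>_. a2) (\<lambda>_. 0)
       \<and> ulam_constant N UNIV (\<lambda>_. a0) (\<lambda>_. a1) (\<lambda>_. a2) (\<lambda>_. 0)
            (1 / \<bar>cmod a0 * Re l1 * Re l2\<bar>)"
proof -
  note NN = assms(1)
  have a2: "a2 = a0 * l1 * l2" using spec[OF assms(3), of 0] by simp
  have "a1 + (a0 * l1 + a0 * l2) = 0" using spec[OF assms(3), of 1] a2 by (simp add: algebra_simps)
  then have "a1 = - (a0 * l1 + a0 * l2)" by (subst eq_neg_iff_add_eq_0)
  then have a1: "a1 = - a0 * (l1 + l2)" by (simp add: algebra_simps)
  have r1: "Re l1 \<noteq> 0" and r2: "Re l2 \<noteq> 0" using assms(4) by auto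
  have ca0: "cmod a0 > 0" using assms(2) by simp
  define L where "L = 1 / \<bar>cmod a0 * Re l1 * Re l2\<bar>"
  have Lpos: "L > 0" using r1 r2 ca0 by (simp add: L_def)
  have opx: "ode_op UNIV (\<lambda>_. a0) (\<lambda>_. a1) (\<lambda>_. a2) x t
       = csmult a0 (D2 UNIV x t) + csmult a1 (D1 UNIV x t) + csmult a2 (x t)" for x :: "real \<Rightarrow> complex^'n" and t
    by (simp add: ode_op_def)
  obtain P P1 P2 where
    Pd1: "\<And>t. (P has_vector_derivative P1 t) (at t)" and
    Pd2: "\<And>t. (P1 has_vector_derivative P2 t) (at t)" and
    Pc: "continuous_on UNIV P2" and
    Peq1: "\<And>t. P1 t = l2 * P t + exp (l1 * of_real t)" and
    Peq2: "\<And>t. P2 t = l2 * P1 t + l1 * exp (l1 * of_real t)"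
  proof (cases "l1 = l2")
    case True
    then have eq: "l1 = l2" .
    then have eq: "l1 = l2" .
    show ?thesis
    proof (rule that[of "\<lambda>t. of_real t * exp (l1 * of_real t)"
                      "\<lambda>t. exp (l1 * of_real t) + l1 * (of_real t * exp (l1 * of_real t))"
                      "\<lambda>t. 2 * l1 * exp (l1 * of_real t) + l1 * l1 * (of_real t * exp (l1 * of_real t))"])
      fix t :: real
      have "((\<lambda>z. z * exp (l1 * z)) has_field_derivative exp (l1 * of_real t) + l1 * (of_real t * exp (l1 * of_real t))) (at (of_real t))"
        by (auto intro!: derivative_eq_intros simp: algebra_simps)
      from has_vector_derivative_real_field[OF this, of UNIV]
      show "((\<lambda>t. of_real t * exp (l1 * of_real t)) has_vector_derivative exp (l1 * of_real t) + l1 * (of_real t * exp (l1 * of_real t))) (at t)" .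
      have "((\<lambda>z. exp (l1 * z) + l1 * (z * exp (l1 * z))) has_field_derivative 2 * l1 * exp (l1 * of_real t) + l1 * l1 * (of_real t * exp (l1 * of_real t))) (at (of_real t))"
        by (auto intro!: derivative_eq_intros simp: algebra_simps)
      from has_vector_derivative_real_field[OF this, of UNIV]
      show "((\<lambda>t. exp (l1 * of_real t) + l1 * (of_real t * exp (l1 * of_real t))) has_vector_derivative 2 * l1 * exp (l1 * of_real t) + l1 * l1 * (of_real t * exp (l1 * of_real t))) (at t)" .
    qed (auto intro!: continuous_intros simp: eq algebra_simps)
  next
    case False
    then have ne: "l1 - l2 \<noteq> 0" by simp
    define K where "K = 1 / (l1 - l2)"
    have K: "K * l1 = l2 * K + 1" using ne by (simp add: K_def field_simps)
    show ?thesis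
    proof (rule that[of "\<lambda>t. K * exp (l1 * of_real t)"
                      "\<lambda>t. K * (l1 * exp (l1 * of_real t))"
                      "\<lambda>t. K * (l1 * (l1 * exp (l1 * of_real t)))"])
      fix t :: real
      have "((\<lambda>z. K * exp (l1 * z)) has_field_derivative K * (l1 * exp (l1 * of_real t))) (at (of_real t))"
        by (auto intro!: derivative_eq_intros simp: algebra_simps)
      from has_vector_derivative_real_field[OF this, of UNIV]
      show "((\<lambda>t. K * exp (l1 * of_real t)) has_vector_derivative K * (l1 * exp (l1 * of_real t))) (at t)" .
      have "((\<lambda>z. K * (l1 * exp (l1 * z))) has_field_derivative K * (l1 * (l1 * exp (l1 * of_real t)))) (at (of_real t))"
        by (auto intro!: derivative_eq_intros simp: algebra_simps)
      from has_vector_derivative_real_field[OF this, of UNIV]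
      show "((\<lambda>t. K * (l1 * exp (l1 * of_real t))) has_vector_derivative K * (l1 * (l1 * exp (l1 * of_real t)))) (at t)" .
    next
      fix t :: real
      show "K * (l1 * exp (l1 * of_real t)) = l2 * (K * exp (l1 * of_real t)) + exp (l1 * of_real t)"
        using arg_cong[OF K, of "\<lambda>y. y * exp (l1 * of_real t)"] by (simp add: algebra_simps)
      show "K * (l1 * (l1 * exp (l1 * of_real t))) = l2 * (K * (l1 * exp (l1 * of_real t))) + l1 * exp (l1 * of_real t)"
        using arg_cong[OF K, of "\<lambda>y. l1 * y * exp (l1 * of_real t)"] by (simp add: algebra_simps)
    qed (auto intro!: continuous_intros)
  qed
  have Ed1: "((\<lambda>t. exp (l2 * of_real t)) has_vector_derivative l2 * exp (l2 * of_real t)) (at t)" for t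
  proof -
    have "((\<lambda>z. exp (l2 * z)) has_field_derivative l2 * exp (l2 * of_real t)) (at (of_real t))"
      by (auto intro!: derivative_eq_intros)
    from has_vector_derivative_real_field[OF this, of UNIV] show ?thesis .
  qed
  have Ed2: "((\<lambda>t. l2 * exp (l2 * of_real t)) has_vector_derivative l2 * l2 * exp (l2 * of_real t)) (at t)" for t
  proof -
    have "((\<lambda>z. l2 * exp (l2 * z)) has_field_derivative l2 * l2 * exp (l2 * of_real t)) (at (of_real t))"
      by (auto intro!: derivative_eq_intros)
    from has_vector_derivative_real_field[OF this, of UNIV] show ?thesis .
  qed
  have Ec: "continuous_on UNIV (\<lambda>t. l2 * l2 * exp (l2 * of_real t))"
    by (auto intro!: continuous_intros)
  have main: "ulam_constant N UNIV (\<lambda>_. a0) (\<lambda>_. a1) (\<lambda>_. a2) (\<lambda>_. 0) L"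
    unfolding ulam_constant_def
  proof (intro conjI Lpos allI impI)
    fix \<epsilon> :: real and \<xi> :: "real \<Rightarrow> complex^'n"
    assume \<epsilon>: "\<epsilon> > 0"
    assume H: "C2_on UNIV \<xi> \<and> (\<forall>t\<in>UNIV. N (ode_op UNIV (\<lambda>_. a0) (\<lambda>_. a1) (\<lambda>_. a2) \<xi> t - 0) \<le> \<epsilon>)"
    define d1 where "d1 = D1 UNIV \<xi>"
    define d2 where "d2 = D2 UNIV \<xi>"
    have xd: "\<And>t. (\<xi> has_vector_derivative d1 t) (at t)"
      and x1d: "\<And>t. (d1 has_vector_derivative d2 t) (at t)"
      using H unfolding C2_on_def d1_def d2_def by auto
    have opb: "N (csmult a0 (d2 t) + csmult a1 (d1 t) + csmult a2 (\<xi> t)) \<le> \<epsilon>" for t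
      using H by (auto simp: opx d1_def d2_def)
    define \<eta> where "\<eta> = (\<lambda>t. d1 t - csmult l2 (\<xi> t))"
    have \<eta>d: "(\<eta> has_vector_derivative d2 t - csmult l2 (d1 t)) (at t)" for t
      unfolding \<eta>_def by (intro has_vector_derivative_diff x1d csm_deriv_right xd)
    have \<eta>b: "N (d2 t - csmult l2 (d1 t) - csmult l1 (\<eta> t)) \<le> \<epsilon> / cmod a0" for t
    proof -
      have "csmult a0 (d2 t - csmult l2 (d1 t) - csmult l1 (\<eta> t))
          = csmult a0 (d2 t) + csmult a1 (d1 t) + csmult a2 (\<xi> t)"
        unfolding vec_eq_iff by (simp add: \<eta>_def a1 a2 algebra_simps)
      then have "cmod a0 * N (d2 t - csmult l2 (d1 t) - csmult l1 (\<eta> t))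
          = N (csmult a0 (d2 t) + csmult a1 (d1 t) + csmult a2 (\<xi> t))"
        by (metis N_cs[OF NN])
      then have "cmod a0 * N (d2 t - csmult l2 (d1 t) - csmult l1 (\<eta> t)) \<le> \<epsilon>"
        using opb[of t] by simp
      then show ?thesis using ca0 by (simp add: field_simps)
    qed
    obtain c1 where c1: "\<And>t. N (\<eta> t - csmult (exp (l1 * of_real t)) c1) \<le> \<epsilon> / cmod a0 / \<bar>Re l1\<bar>"
      using first_gen[OF NN r1 \<eta>d \<eta>b] by blast
    define u where "u = (\<lambda>t. \<xi> t - csmult (P t) c1)"
    have ud: "(u has_vector_derivative d1 t - csmult (P1 t) c1) (at t)" for t
      unfolding u_def by (intro has_vector_derivative_diff xd csm_deriv_left Pd1)
    have ub: "N (d1 t - csmult (P1 t) c1 - csmult l2 (u t)) \<le> \<epsilon> / cmod a0 / \<bar>Re l1\<bar>" for t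
    proof -
      have "d1 t - csmult (P1 t) c1 - csmult l2 (u t) = \<eta> t - csmult (exp (l1 * of_real t)) c1"
        unfolding vec_eq_iff by (simp add: u_def \<eta>_def Peq1 algebra_simps)
      then show ?thesis using c1[of t] by simp
    qed
    obtain c2 where c2: "\<And>t. N (u t - csmult (exp (l2 * of_real t)) c2) \<le> \<epsilon> / cmod a0 / \<bar>Re l1\<bar> / \<bar>Re l2\<bar>"
      using first_gen[OF NN r2 ud ub] by blast
    define x where "x = (\<lambda>t. csmult (P t) c1 + csmult (exp (l2 * of_real t)) c2)"
    note S = sol2[OF Pd1 Pd2 Pc Ed1 Ed2 Ec x_def]
    show "\<exists>x. C2_on UNIV x \<and> (\<forall>t\<in>UNIV. ode_op UNIV (\<lambda>_. a0) (\<lambda>_. a1) (\<lambda>_. a2) x t = 0) \<and>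
              (\<forall>t\<in>UNIV. N (\<xi> t - x t) \<le> L * \<epsilon>)"
    proof (intro exI[of _ x] conjI ballI)
      show "C2_on UNIV x" by (rule S(1))
      fix t
      show "ode_op UNIV (\<lambda>_. a0) (\<lambda>_. a1) (\<lambda>_. a2) x t = 0"
        unfolding opx S(2) S(3)
        unfolding vec_eq_iff by (simp add: x_def Peq1 Peq2 a1 a2 algebra_simps)
    next
      fix t
      have "\<xi> t - x t = u t - csmult (exp (l2 * of_real t)) c2"
        by (simp add: x_def u_def)
      then have "N (\<xi> t - x t) \<le> \<epsilon> / cmod a0 / \<bar>Re l1\<bar> / \<bar>Re l2\<bar>" using c2[of t] by simp
      also have "\<dots> = L * \<epsilon>" by (simp add: L_def abs_mult)
      finally show "N (\<xi> t - x t) \<le> L * \<epsilon>" .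
    qed
  qed
  then show ?thesis unfolding ulam_stable_def L_def by blast
qed

end
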